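(* (a) Let $\alpha\in(\tfrac12,1]$ be rational and $\lambda\in\mathbb N$, and let $k=\lceil \frac{\lambda\alpha}{2\alpha-1}\rceil$. For every profile $P$, every ranking $r$ that Approval Voting may output on $P$ (under any tie-breaking), and every group $N'$ that is $(\alpha,\lambda)$-significant in $P$, we have $\mathrm{avg}(N',r_{\le k})\ge\lambda$. (b) For every rational $\alpha\in(\tfrac12,1]$ and $\lambda\in\mathbb N$, with $k'=\lceil \frac{\lambda\alpha}{2\alpha-1}\rceil-1$, there exist a profile $P$, a group $N'$ that is $(\alpha,\lambda)$-significant in $P$, and a ranking $r$ that Approval Voting may output on $P$ (for some tie-breaking) such that $\mathrm{avg}(N',r_{\le k'})<\lambda$. (c) For every rational $\alpha\in(0,\tfrac12)$, every $\lambda\in\mathbb N$ and every $k\in\mathbb N$, there exist a profile $P$, a group $N'$ that is $(\alpha,\lambda)$-significant in $P$, and a ranking $r$ that Approval Voting may output on $P$ (for some tie-breaking) such that $\mathrm{avg}(N',r_{\le k})<\lambda$. In particular, for $\alpha<\tfrac12$ Approval Voting does not satisfy $\kappa$-group representation for any function $\kappa$.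
   Context: Let $N=[n]$ be a finite set of voters and $A$ a finite set of $m$ alternatives; a profile $P=(A_1,\dots,A_n)$ gives each voter $i$ a non-empty approval set $A_i\subseteq A$. $N_a=\{i: a\in A_i\}$ and $|N_a|$ is the approval score of $a$. A ranking $r=(r_1,\dots,r_m)$ is a linear order of $A$, $r_{\le k}=\{r_1,\dots,r_k\}$, with the convention $r_{\le k}=A$ for $k\ge m$. Approval Voting outputs any ranking with $|N_{r_1}|\ge\dots\ge|N_{r_m}|$ (ties broken arbitrarily). For nonempty $N'\subseteq N$ and $S\subseteq A$, $\mathrm{avg}(N',S)=\frac1{|N'|}\sum_{i\in N'}|A_i\cap S|$. The cohesiveness of $N'$ is $\lambda(N')=|\bigcap_{i\in N'}A_i|$; $N'$ is $(\alpha,\lambda)$-significant in $P$ if $|N'|=\lceil\alpha n\rceil$ and $\lambda(N')\ge\lambda$. Given $\kappa:((0,1]\cap\mathbb Q)\times\mathbb N\to\mathbb N$, a ranking rule satisfies $\kappa$-group representation if for every profile $P$, every output ranking $r$ (under every tie-breaking), every rational $\alpha\in(0,1]$, every $\lambda\in\mathbb N$ and every $(\alpha,\lambda)$-significant $N'$, $\mathrm{avg}(N',r_{\le\kappa(\alpha,\lambda)})\ge\lambda$. *)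

theory Defs
  imports Complex_Main
begin

definition is_profile :: "nat \<Rightarrow> 'a set \<Rightarrow> (nat \<Rightarrow> 'a set) \<Rightarrow> bool" where
  "is_profile n A P \<longleftrightarrow> n \<ge> 1 \<and> finite A \<and> (\<forall>i<n. P i \<noteq> {} \<and> P i \<subseteq> A)"

definition score :: "nat \<Rightarrow> (nat \<Rightarrow> 'a set) \<Rightarrow> 'a \<Rightarrow> nat" where
  "score n P a = card {i. i < n \<and> a \<in> P i}"

definition is_ranking :: "'a set \<Rightarrow> 'a list \<Rightarrow> bool" where
  "is_ranking A r \<longleftrightarrow> distinct r \<and> set r = A"

definition av_output :: "nat \<Rightarrow> 'a set \<Rightarrow> (nat \<Rightarrow> 'a set) \<Rightarrow> 'a list \<Rightarrow> bool" where
  "av_output n A P r \<longleftrightarrow> is_ranking A r \<and> sorted_wrt (\<lambda>a b. score n P a \<ge> score n P b) r"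

text \<open>r_{<=k}; equals A when k >= m.\<close>
definition top_k :: "'a list \<Rightarrow> nat \<Rightarrow> 'a set" where
  "top_k r k = set (take k r)"

definition avg :: "(nat \<Rightarrow> 'a set) \<Rightarrow> nat set \<Rightarrow> 'a set \<Rightarrow> real" where
  "avg P N' S = (\<Sum>i\<in>N'. real (card (P i \<inter> S))) / real (card N')"

definition cohesiveness :: "(nat \<Rightarrow> 'a set) \<Rightarrow> nat set \<Rightarrow> nat" where
  "cohesiveness P N' = card (\<Inter>i\<in>N'. P i)"

definition significant :: "nat \<Rightarrow> (nat \<Rightarrow> 'a set) \<Rightarrow> rat \<Rightarrow> nat \<Rightarrow> nat set \<Rightarrow> bool" where
  "significant n P \<alpha> lam N' \<longleftrightarrow>
     N' \<subseteq> {..<n} \<and> N' \<noteq> {} \<and> card N' = nat \<lceil>\<alpha> * of_nat n\<rceil> \<and> cohesiveness P N' \<ge> lam"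

definition av_kappa_group_rep :: "'a itself \<Rightarrow> (rat \<Rightarrow> nat \<Rightarrow> nat) \<Rightarrow> bool" where
  "av_kappa_group_rep _ \<kappa> \<longleftrightarrow>
     (\<forall>n (A::'a set) P r \<alpha> lam N'. is_profile n A P \<and> av_output n A P r \<and>
        0 < \<alpha> \<and> \<alpha> \<le> 1 \<and> lam \<ge> 1 \<and> significant n P \<alpha> lam N' \<longrightarrow>
        avg P N' (top_k r (\<kappa> \<alpha> lam)) \<ge> real lam)"

end

theory Submission
  imports Defs
begin



lemma count_swap:
  assumes "finite T"
  shows "(\<Sum>t\<in>T. score n P t) = (\<Sum>i<n. card (P i \<inter> T))"
proof -
  have "(\<Sum>t\<in>T. score n P t) = (\<Sum>t\<in>T. \<Sum>i<n. if t \<in> P i then 1 else 0)"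
    unfolding score_def
    by (rule sum.cong) (auto simp: sum.If_cases intro!: arg_cong[where f=card])
  also have "\<dots> = (\<Sum>i<n. \<Sum>t\<in>T. if t \<in> P i then 1 else 0)" by (rule sum.swap)
  also have "\<dots> = (\<Sum>i<n. card (P i \<inter> T))"
    using assms by (intro sum.cong) (auto simp: sum.If_cases Int_commute)
  finally show ?thesis .
qed

lemma ceil_nat_ge: "(x::rat) \<le> of_nat (nat \<lceil>x\<rceil>)"
proof -
  have "x \<le> of_int \<lceil>x\<rceil>" by (rule le_of_int_ceiling)
  also have "\<dots> \<le> of_nat (nat \<lceil>x\<rceil>)" by (cases "\<lceil>x\<rceil> \<ge> 0") auto
  finally show ?thesis .
qed

lemma partA:
  fixes \<alpha> :: rat
  assumes a1: "1/2 < \<alpha>" and a2: "\<alpha> \<le> 1" and lam: "lam \<ge> 1"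
    and prof: "is_profile n A P" and out: "av_output n A P r"
    and sig: "significant n P \<alpha> lam N'"
  shows "avg P N' (top_k r (nat \<lceil>of_nat lam * \<alpha> / (2 * \<alpha> - 1)\<rceil>)) \<ge> real lam"
proof -
  define k where "k = nat \<lceil>of_nat lam * \<alpha> / (2 * \<alpha> - 1)\<rceil>"
  define T where "T = top_k r k"
  define s where "s = card N'"
  define C where "C = (\<Inter>i\<in>N'. P i)"
  have N'n: "N' \<subseteq> {..<n}" and N'ne: "N' \<noteq> {}" and sdef: "s = nat \<lceil>\<alpha> * of_nat n\<rceil>"
    and Cl: "card C \<ge> lam"
    using sig unfolding significant_def cohesiveness_def s_def C_def by auto
  have finA: "finite A" and PA: "\<And>i. i < n \<Longrightarrow> P i \<subseteq> A" using prof unfolding is_profile_def by auto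
  have dist: "distinct r" and setr: "set r = A" and sorted: "sorted_wrt (\<lambda>a b. score n P a \<ge> score n P b) r"
    using out unfolding av_output_def is_ranking_def by auto
  have finN': "finite N'" using N'n finite_subset by blast
  have spos: "s > 0" using N'ne finN' s_def by auto
  have finP: "\<And>i. i \<in> N' \<Longrightarrow> finite (P i)" using PA N'n finA finite_subset by blast
  have finT: "finite T" unfolding T_def top_k_def by simp
  have CP: "\<And>i. i \<in> N' \<Longrightarrow> C \<subseteq> P i" unfolding C_def by blast
  show ?thesis
  proof (cases "C \<subseteq> T")
    case True
    have "\<And>i. i \<in> N' \<Longrightarrow> real lam \<le> real (card (P i \<inter> T))"
    proof -
      fix i assume i: "i \<in> N'"
      have "C \<subseteq> P i \<inter> T" using CP[OF i] True by blast
      hence "card C \<le> card (P i \<inter> T)" using finT by (intro card_mono) auto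
      thus "real lam \<le> real (card (P i \<inter> T))" using Cl by simp
    qed
    hence "(\<Sum>i\<in>N'. real lam) \<le> (\<Sum>i\<in>N'. real (card (P i \<inter> T)))" by (rule sum_mono)
    hence "real s * real lam \<le> (\<Sum>i\<in>N'. real (card (P i \<inter> T)))" using s_def by simp
    thus ?thesis unfolding avg_def T_def[symmetric] k_def[symmetric] s_def[symmetric]
      using spos by (simp add: field_simps)
  next
    case False
    then obtain c where cC: "c \<in> C" and cT: "c \<notin> T" by blast
    have cA: "c \<in> A" using CP[of "SOME i. i \<in> N'"] PA N'n N'ne cC
      by (metis some_in_eq subsetD lessThan_iff)
    then obtain j where j: "j < length r" "r ! j = c" using setr by (metis in_set_conv_nth)
    have jk: "k \<le> j"
    proof (rule ccontr)
      assume "\<not> k \<le> j"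
      hence "c \<in> set (take k r)" using j by (metis in_set_conv_nth length_take min_less_iff_conj nth_take not_le)
      thus False using cT unfolding T_def top_k_def by simp
    qed
    have scc: "score n P c \<ge> s"
    proof -
      have "N' \<subseteq> {i. i < n \<and> c \<in> P i}" using N'n CP cC by blast
      thus ?thesis unfolding score_def s_def by (intro card_mono) auto
    qed
    have sT: "\<And>t. t \<in> T \<Longrightarrow> score n P t \<ge> s"
    proof -
      fix t assume "t \<in> T"
      then obtain i where i: "i < length (take k r)" "take k r ! i = t"
        unfolding T_def top_k_def by (metis in_set_conv_nth)
      have "i < k" "i < j" using i jk by auto
      hence "score n P (r ! i) \<ge> score n P (r ! j)" using sorted j(1)
        unfolding sorted_wrt_iff_nth_less by blast
      thus "score n P t \<ge> s" using i j scc \<open>i < k\<close> by simp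
    qed
    have cardT: "card T = k" unfolding T_def top_k_def using dist jk j(1)
      by (simp add: distinct_card)
    have "k * s \<le> (\<Sum>t\<in>T. score n P t)"
      using sum_mono[of T "\<lambda>_. s" "score n P"] sT cardT by simp
    also have "\<dots> = (\<Sum>i<n. card (P i \<inter> T))" by (rule count_swap[OF finT])
    also have "\<dots> = (\<Sum>i\<in>N'. card (P i \<inter> T)) + (\<Sum>i\<in>{..<n} - N'. card (P i \<inter> T))"
      using N'n by (metis finite_lessThan sum.subset_diff add.commute)
    also have "(\<Sum>i\<in>{..<n} - N'. card (P i \<inter> T)) \<le> (\<Sum>i\<in>{..<n} - N'. k)"
      by (intro sum_mono) (metis cardT card_mono finT inf_le2)
    also have "(\<Sum>i\<in>{..<n} - N'. k) = (n - s) * k"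
      using N'n finN' s_def by (simp add: card_Diff_subset)
    finally have key: "k * s \<le> (\<Sum>i\<in>N'. card (P i \<inter> T)) + (n - s) * k" by simp
    define X where "X = (\<Sum>i\<in>N'. card (P i \<inter> T))"
    have sn: "s \<le> n" using N'n s_def by (metis card_lessThan card_mono finite_lessThan)
    have kq: "of_nat k \<ge> of_nat lam * \<alpha> / (2 * \<alpha> - 1)" unfolding k_def by (rule ceil_nat_ge)
    have sq: "of_nat s \<ge> \<alpha> * of_nat n" unfolding sdef by (rule ceil_nat_ge)
    have "of_nat lam * of_nat s \<le> (of_nat k * (2 * of_nat s - of_nat n) :: rat)"
    proof -
      have d: "2 * \<alpha> - 1 > 0" using a1 by simp
      have k1: "of_nat k * (2*\<alpha> - 1) \<ge> of_nat lam * \<alpha>" using kq d by (simp add: pos_divide_le_eq)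
      hence k2: "\<alpha> * (2 * of_nat k - of_nat lam) \<ge> of_nat k" by (simp add: algebra_simps)
      have kpos: "(of_nat k::rat) \<ge> 0" by simp
      have pos2: "2 * of_nat k - of_nat lam \<ge> (0::rat)"
        proof (rule ccontr)
        assume "\<not> 2 * of_nat k - of_nat lam \<ge> (0::rat)"
        hence "\<alpha> * (2 * of_nat k - of_nat lam) < 0" using a1 by (intro mult_pos_neg) auto
        thus False using k2 kpos by linarith
      qed
      have "of_nat s * (2 * of_nat k - of_nat lam) \<ge> \<alpha> * of_nat n * (2 * of_nat k - of_nat lam)"
        using sq pos2 by (intro mult_right_mono) auto
      moreover have "\<alpha> * of_nat n * (2 * of_nat k - of_nat lam) \<ge> of_nat n * of_nat k"
        using k2 by (metis mult.assoc mult.commute mult_left_mono of_nat_0_le_iff)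
      ultimately show ?thesis by (simp add: algebra_simps)
    qed
    hence "(of_int (int lam * int s) :: rat) \<le> of_int (int k * (2 * int s - int n))" by simp
    hence I: "int lam * int s \<le> int k * (2 * int s - int n)" by (simp only: of_int_le_iff)
    have I2: "int k * int s \<le> int X + (int n - int s) * int k"
    proof -
      have "int (k * s) \<le> int (X + (n - s) * k)" using key unfolding X_def by (simp only: of_nat_le_iff)
      thus ?thesis using sn by (simp add: of_nat_diff)
    qed
    have "int lam * int s \<le> int X" using I I2 by (simp add: algebra_simps)
    hence "real lam * real s \<le> real X" by (metis of_int_of_nat_eq of_int_le_iff of_nat_mult)
    moreover have "avg P N' T = real X / real s" unfolding avg_def X_def s_def by simp
    ultimately show ?thesis unfolding T_def k_def[symmetric]
      using spos by (simp add: pos_le_divide_eq)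
  qed
qed



lemma partB:
  fixes \<alpha> :: rat
  assumes a1: "1/2 < \<alpha>" and a2: "\<alpha> \<le> 1" and lam: "lam \<ge> 1"
  shows "\<exists>n (A::nat set) P r N'. is_profile n A P \<and> significant n P \<alpha> lam N' \<and>
          av_output n A P r \<and>
          avg P N' (top_k r (nat (\<lceil>of_nat lam * \<alpha> / (2 * \<alpha> - 1)\<rceil> - 1))) < real lam"
proof -
  obtain p q where pq: "quotient_of \<alpha> = (p, q)" by (cases "quotient_of \<alpha>") auto
  have qpos: "q > 0" using pq quotient_of_denom_pos by blast
  have al: "\<alpha> = of_int p / of_int q" using pq quotient_of_div by blast
  have alq: "\<alpha> * of_int q = of_int p" using al qpos by simp
  have "of_int p > (0::rat)" using alq a1 qpos by (metis less_trans mult_pos_pos of_int_0_less_iff half_gt_zero zero_less_one)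
  hence ppos: "p > 0" by simp
  have "(of_int p :: rat) \<le> of_int q" proof -
    have "\<alpha> * of_int q \<le> 1 * of_int q" using a2 qpos by (intro mult_right_mono) auto
    thus ?thesis using alq by simp
  qed
  hence pleq: "p \<le> q" by simp
  have "(of_int q :: rat) < 2 * of_int p" proof -
    have "1/2 * of_int q < \<alpha> * of_int q" using a1 qpos by (intro mult_strict_right_mono) auto
    thus ?thesis using alq by simp
  qed
  hence q2p: "q < 2 * p" by linarith
  define n where "n = nat q"
  define s where "s = nat p"
  define m where "m = 2 * s - n"
  define x where "x = of_nat lam * \<alpha> / (2 * \<alpha> - 1)"
  define K where "K = nat (\<lceil>x\<rceil> - 1)"
  define C where "C = {K..<K+lam}"
  define D where "D = {0..<K}"
  define P where "P = (\<lambda>i. if i < m then D \<union> C else if i < s then C else D \<union> {K+lam})"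
  define r where "r = [0..<K+lam+1]"
  have sn: "s \<le> n" "m \<le> s" "1 \<le> s" "m + (n - s) = s" "s < n \<Longrightarrow> True"
    unfolding s_def n_def m_def using pleq ppos q2p by auto
  have prof: "is_profile n {0..<K+lam+1} P"
    unfolding is_profile_def P_def C_def D_def using sn lam by auto
  have cs: "\<lceil>\<alpha> * of_nat n\<rceil> = int s" unfolding n_def s_def using qpos ppos alq by simp
  have CI: "C \<subseteq> (\<Inter>i\<in>{..<s}. P i)" unfolding P_def by auto
  have "card C \<le> card (\<Inter>i\<in>{..<s}. P i)"
  proof (rule card_mono[OF _ CI])
    have "(\<Inter>i\<in>{..<s}. P i) \<subseteq> P 0" using sn by auto
    moreover have "finite (P 0)" unfolding P_def C_def D_def by auto
    ultimately show "finite (\<Inter>i\<in>{..<s}. P i)" by (rule finite_subset)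
  qed
  hence coh: "cohesiveness P {..<s} \<ge> lam" unfolding cohesiveness_def C_def by simp
  have sig: "significant n P \<alpha> lam {..<s}"
    unfolding significant_def using cs coh sn by (auto simp: lessThan_empty_iff)
  define f where "f = (\<lambda>a. if a < K + lam then s else n - s)"
  have sc: "\<And>a. a < K + lam + 1 \<Longrightarrow> score n P a = f a"
  proof -
    fix a assume a: "a < K + lam + 1"
    show "score n P a = f a"
    proof (cases "a < K")
      case True
      hence "{i. i < n \<and> a \<in> P i} = {..<m} \<union> {s..<n}" unfolding P_def D_def C_def using sn by auto
      moreover have "card ({..<m} \<union> {s..<n}) = m + (n - s)" using sn
        by (subst card_Un_disjoint) auto
      ultimately show ?thesis unfolding score_def f_def using sn True by simp
    next
      case False
      show ?thesis
      proof (cases "a < K + lam")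
        case True
        hence "{i. i < n \<and> a \<in> P i} = {..<s}" unfolding P_def D_def C_def using sn False by auto
        thus ?thesis unfolding score_def f_def using True by simp
      next
        case F2: False
        hence "a = K + lam" using a by simp
        hence "{i. i < n \<and> a \<in> P i} = {s..<n}" unfolding P_def D_def C_def using sn by auto
        thus ?thesis unfolding score_def f_def using F2 by simp
      qed
    qed
  qed
  have fmono: "\<And>a b. a \<le> b \<Longrightarrow> f b \<le> f a" unfolding f_def using sn by auto
  have out: "av_output n {0..<K+lam+1} P r"
    unfolding av_output_def is_ranking_def r_def
    by (auto simp del: upt_Suc simp: sorted_wrt_iff_nth_less sc fmono)
  have T: "top_k r K = D" unfolding top_k_def r_def D_def by (simp del: upt_Suc add: take_upt)
  have "(\<Sum>i<s. real (card (P i \<inter> D))) = (\<Sum>i<s. if i < m then real K else 0)"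
    by (rule sum.cong) (auto simp: P_def D_def C_def)
  also have "\<dots> = real m * real K"
  proof -
    have "(\<Sum>i<s. if i < m then real K else 0) = (\<Sum>i\<in>{i\<in>{..<s}. i < m}. real K)"
      by (rule sum.inter_filter[symmetric]) simp
    also have "{i\<in>{..<s}. i < m} = {..<m}" using sn by auto
    finally show ?thesis by simp
  qed
  finally have av: "avg P {..<s} (top_k r K) = real m * real K / real s" unfolding avg_def T by simp
  have xpos: "x > 0" unfolding x_def using a1 lam by (intro divide_pos_pos) auto
  have "\<lceil>x\<rceil> \<ge> 1" using xpos by (simp add: one_le_ceiling zero_less_ceiling)
  have Kx: "of_nat K < x"
  proof -
    have "of_nat K = (of_int (\<lceil>x\<rceil> - 1) :: rat)" unfolding K_def using \<open>\<lceil>x\<rceil> \<ge> 1\<close> by simp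
    also have "\<dots> < x" using ceiling_correct[of x] by simp
    finally show ?thesis .
  qed
  have "of_nat K * (2 * \<alpha> - 1) < of_nat lam * \<alpha>" using Kx a1 unfolding x_def
    by (simp add: less_divide_eq)
  hence "of_nat K * (2 * \<alpha> - 1) * of_int q < of_nat lam * \<alpha> * of_int q" using qpos by simp
  moreover have "of_nat K * (2*\<alpha>-1) * of_int q = of_nat K * (2 * (\<alpha> * of_int q) - of_int q)"
    by (simp add: algebra_simps)
  moreover have "of_nat lam * \<alpha> * of_int q = of_nat lam * (\<alpha> * of_int q)" by simp
  ultimately have "of_nat K * (2 * of_int p - of_int q) < of_nat lam * (of_int p :: rat)"
    unfolding alq by simp
  hence "(of_int (int K * (2 * p - q)) :: rat) < of_int (int lam * p)" by simp
  hence "int K * (2 * p - q) < int lam * p" by (simp only: of_int_less_iff)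
  hence "int K * int m < int lam * int s" unfolding m_def s_def n_def using q2p ppos qpos
    by (simp add: of_nat_diff)
  hence "real K * real m < real lam * real s" by (metis of_int_of_nat_eq of_int_less_iff of_nat_mult)
  hence "avg P {..<s} (top_k r K) < real lam" unfolding av using sn
    by (simp add: divide_less_eq mult.commute)
  thus ?thesis using prof sig out unfolding K_def x_def by blast
qed



lemma partC:
  fixes \<alpha> :: rat
  assumes a0: "0 < \<alpha>" and a1: "\<alpha> < 1/2" and lam: "lam \<ge> 1"
  shows "\<exists>n (A::nat set) P r N'. is_profile n A P \<and> significant n P \<alpha> lam N' \<and>
          av_output n A P r \<and> avg P N' (top_k r k) < real lam"
proof -
  define K where "K = max 1 k"
  define P where "P = (\<lambda>i::nat. if i = 0 then {K..<K+lam} else {0..<K})"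
  define r where "r = [0..<K+lam]"
  have K1: "K \<ge> 1" "k \<le> K" unfolding K_def by auto
  have prof: "is_profile 2 {0..<K+lam} P"
    unfolding is_profile_def P_def using K1 lam by auto
  have c: "\<lceil>\<alpha> * of_nat 2\<rceil> = 1" using a0 a1 by (intro ceiling_unique) auto
  have coh: "cohesiveness P {0} = lam" unfolding cohesiveness_def P_def by simp
  have sig: "significant 2 P \<alpha> lam {0}"
    unfolding significant_def using c coh by simp
  have sc: "\<And>a. a < K + lam \<Longrightarrow> score 2 P a = 1"
  proof -
    fix a assume a: "a < K + lam"
    show "score 2 P a = 1"
    proof (cases "a < K")
      case True
      hence "{i. i < 2 \<and> a \<in> P i} = {1}" unfolding P_def by auto
      thus ?thesis unfolding score_def by simp
    next
      case False
      hence "{i. i < 2 \<and> a \<in> P i} = {0}" using a unfolding P_def by auto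
      thus ?thesis unfolding score_def by simp
    qed
  qed
  have out: "av_output 2 {0..<K+lam} P r"
    unfolding av_output_def is_ranking_def r_def
    by (auto simp: sorted_wrt_iff_nth_less sc)
  have "top_k r k \<subseteq> {0..<K}" unfolding top_k_def r_def using K1
    by (auto simp: take_upt)
  hence "P 0 \<inter> top_k r k = {}" unfolding P_def by auto
  hence "avg P {0} (top_k r k) = 0" unfolding avg_def by simp
  hence "avg P {0} (top_k r k) < real lam" using lam by simp
  thus ?thesis using prof sig out by blast
qed

lemma partD: "\<not> av_kappa_group_rep TYPE(nat) \<kappa>"
proof
  assume h: "av_kappa_group_rep TYPE(nat) \<kappa>"
  obtain n and A :: "nat set" and P r N' where
    "is_profile n A P" "significant n P (1/4) 1 N'" "av_output n A P r"
    "avg P N' (top_k r (\<kappa> (1/4) 1)) < real (1::nat)"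
    using partC[of "1/4" 1 "\<kappa> (1/4) 1"] by auto
  thus False using h unfolding av_kappa_group_rep_def
    by (metis le_numeral_extra(4) not_le rel_simps(76) zero_less_divide_1_iff zero_less_numeral one_le_numeral divide_le_eq_1)
qed


theorem theorem2:
  shows
   "(\<forall>(\<alpha>::rat) (lam::nat) n (A::'a set) P r N'.
       1/2 < \<alpha> \<and> \<alpha> \<le> 1 \<and> lam \<ge> 1 \<and> is_profile n A P \<and> av_output n A P r \<and>
       significant n P \<alpha> lam N' \<longrightarrow>
       avg P N' (top_k r (nat \<lceil>of_nat lam * \<alpha> / (2 * \<alpha> - 1)\<rceil>)) \<ge> real lam)
  \<and> (\<forall>(\<alpha>::rat) (lam::nat). 1/2 < \<alpha> \<and> \<alpha> \<le> 1 \<and> lam \<ge> 1 \<longrightarrow>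
       (\<exists>n (A::nat set) P r N'. is_profile n A P \<and> significant n P \<alpha> lam N' \<and>
          av_output n A P r \<and>
          avg P N' (top_k r (nat (\<lceil>of_nat lam * \<alpha> / (2 * \<alpha> - 1)\<rceil> - 1))) < real lam))
  \<and> (\<forall>(\<alpha>::rat) (lam::nat) (k::nat). 0 < \<alpha> \<and> \<alpha> < 1/2 \<and> lam \<ge> 1 \<and> k \<ge> 1 \<longrightarrow>
       (\<exists>n (A::nat set) P r N'. is_profile n A P \<and> significant n P \<alpha> lam N' \<and>
          av_output n A P r \<and> avg P N' (top_k r k) < real lam))
  \<and> (\<forall>\<kappa>. \<not> av_kappa_group_rep TYPE(nat) \<kappa>)"
  using partA partB partC partD by blast

end
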